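(* Let $1\le p\le\infty$ and let $A,B\in\mathcal{B}_F$ with $L_a,L_b>0$. Then $$d_p\big(\psi(A),\psi(B)\big)\le\frac{4\,n_{\max}^{1-\frac1p}\,d_p(A,B)}{L_{\max}}=2r_p(A,B).$$
   Context: A persistence barcode is a finite multiset of intervals $[x,y]$, $x\le y$; $\mathcal{B}_F$ is the set of barcodes all of whose intervals have finite endpoints. For $A=\{[x_i^a,y_i^a]\}_{i=1}^{n_a}$, $\ell_i^a=y_i^a-x_i^a$, $L_a=\sum_i\ell_i^a$; similarly for $B$; $n_{\max}=\max\{n_a,n_b\}$, $L_{\max}=\max\{L_a,L_b\}$. The projection $\psi$ sends $A$ to $\psi(A)=\{[0,\ell_i^a/L_a]\}_{i=1}^{n_a}$. $p$-th Wasserstein distance: pad the smaller barcode with zero-length intervals $[t,t]$ until both have $n_{\max}$ intervals; $d_p(A,B)=\big(\min_\gamma\sum_i\max\{|x_i^a-x^b_{\gamma(i)}|^p,|y_i^a-y^b_{\gamma(i)}|^p\}\big)^{1/p}$ for $p<\infty$, $d_\infty(A,B)=\min_\gamma\max_i\max\{|x_i^a-x^b_{\gamma(i)}|,|y_i^a-y^b_{\gamma(i)}|\}$, minima over bijections $\gamma$ (and paddings). Relative error $r_p(A,B)=2n_{\max}^{1-1/p}d_p(A,B)/L_{\max}$, with $n_{\max}^{1-1/\infty}=n_{\max}$. *)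

theory Defs
  imports Complex_Main "HOL-Library.Multiset" "HOL-Library.Extended_Real"
begin

text \<open>A barcode is a finite multiset of intervals [x,y], represented as pairs (x,y).
  Finite endpoints are automatic for reals; x \<le> y is the validity condition.\<close>
type_synonym barcode = "(real \<times> real) multiset"

definition in_BF :: "barcode \<Rightarrow> bool" where
  "in_BF A \<longleftrightarrow> (\<forall>q\<in>#A. fst q \<le> snd q)"

definition total_length :: "barcode \<Rightarrow> real" where
  "total_length A = sum_mset (image_mset (\<lambda>q. snd q - fst q) A)"

definition n_max :: "barcode \<Rightarrow> barcode \<Rightarrow> nat" where
  "n_max A B = max (size A) (size B)"

definition L_max :: "barcode \<Rightarrow> barcode \<Rightarrow> real" where
  "L_max A B = max (total_length A) (total_length B)"

definition psi :: "barcode \<Rightarrow> barcode" where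
  "psi A = image_mset (\<lambda>q. (0, (snd q - fst q) / total_length A)) A"

definition icost :: "real \<times> real \<Rightarrow> real \<times> real \<Rightarrow> real" where
  "icost a b = max \<bar>fst a - fst b\<bar> \<bar>snd a - snd b\<bar>"

text \<open>Cost of the matching i \<mapsto> i between two equal-length lists
  (any bijection is realised by reordering the lists).\<close>
definition match_cost :: "ereal \<Rightarrow> (real \<times> real) list \<Rightarrow> (real \<times> real) list \<Rightarrow> real" where
  "match_cost p xs ys =
     (if p = \<infinity> then Max (insert 0 {icost (xs ! i) (ys ! i) | i. i < length xs})
      else (\<Sum>i<length xs. icost (xs ! i) (ys ! i) powr real_of_ereal p) powr (1 / real_of_ereal p))"

definition padded_enum :: "nat \<Rightarrow> barcode \<Rightarrow> (real \<times> real) list \<Rightarrow> bool" where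
  "padded_enum n A xs \<longleftrightarrow> length xs = n \<and>
     (\<exists>P. mset xs = A + P \<and> (\<forall>q\<in>#P. fst q = snd q))"

definition wdist :: "ereal \<Rightarrow> barcode \<Rightarrow> barcode \<Rightarrow> real" where
  "wdist p A B = Inf {match_cost p xs ys | xs ys.
      padded_enum (n_max A B) A xs \<and> padded_enum (n_max A B) B ys}"

definition nexp :: "ereal \<Rightarrow> nat \<Rightarrow> real" where
  "nexp p n = (if p = \<infinity> then real n else real n powr (1 - 1 / real_of_ereal p))"

definition rel_err :: "ereal \<Rightarrow> barcode \<Rightarrow> barcode \<Rightarrow> real" where
  "rel_err p A B = 2 * nexp p (n_max A B) * wdist p A B / L_max A B"

end

theory Submission
  imports Defs "HOL-Analysis.Analysis"
begin
lemma elem: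
  fixes La Lb la lb D :: real
  assumes "La > 0" "Lb > 0" "la \<ge> 0" "lb \<ge> 0" "\<bar>La - Lb\<bar> \<le> D"
  shows "\<bar>la/La - lb/Lb\<bar> \<le> \<bar>la - lb\<bar>/max La Lb + D * (if Lb \<le> La then lb/Lb else la/La) / max La Lb"
proof (cases "Lb \<le> La")
  case True
  have e: "la/La - lb/Lb = (la - lb)/La + (lb/Lb) * (Lb - La)/La"
    using assms by (simp add: field_simps)
  have m: "lb * \<bar>Lb - La\<bar> \<le> lb * D" using assms
    by (metis abs_minus_commute mult_left_mono)
  have "\<bar>(lb/Lb) * (Lb - La)/La\<bar> = (lb * \<bar>Lb - La\<bar>) / (Lb*La)"
    using assms by (simp add: abs_mult)
  also have "\<dots> \<le> (lb * D) / (Lb*La)" using m assms by (simp add: divide_right_mono)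
  also have "\<dots> = D * (lb/Lb) / La" by simp
  finally have "\<bar>(lb/Lb) * (Lb - La)/La\<bar> \<le> D * (lb/Lb) / La" .
  moreover have "\<bar>(la - lb)/La\<bar> = \<bar>la - lb\<bar>/La" using assms by simp
  moreover have "max La Lb = La" using True by simp
  ultimately show ?thesis using True e
    by (smt (verit) abs_triangle_ineq)
next
  case False
  have e: "la/La - lb/Lb = (la - lb)/Lb + (la/La) * (Lb - La)/Lb"
    using assms by (simp add: field_simps)
  have m: "la * \<bar>Lb - La\<bar> \<le> la * D" using assms
    by (metis abs_minus_commute mult_left_mono)
  have "\<bar>(la/La) * (Lb - La)/Lb\<bar> = (la * \<bar>Lb - La\<bar>) / (La*Lb)"
    using assms by (simp add: abs_mult)
  also have "\<dots> \<le> (la * D) / (La*Lb)" using m assms by (simp add: divide_right_mono)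
  also have "\<dots> = D * (la/La) / Lb" by simp
  finally have "\<bar>(la/La) * (Lb - La)/Lb\<bar> \<le> D * (la/La) / Lb" .
  moreover have "\<bar>(la - lb)/Lb\<bar> = \<bar>la - lb\<bar>/Lb" using assms by simp
  moreover have "max La Lb = Lb" using False by simp
  moreover have "(if Lb \<le> La then lb/Lb else la/La) = la/La" using False by simp
  ultimately show ?thesis using e
    by (smt (verit) abs_triangle_ineq add_divide_distrib)
qed

lemma power_sum_le:
  fixes c :: "'i \<Rightarrow> real" and q :: real
  assumes q: "q \<ge> 1" and fin: "finite I" and nn: "\<And>i. i \<in> I \<Longrightarrow> c i \<ge> 0"
  shows "(\<Sum>i\<in>I. c i) powr q \<le> real (card I) powr (q - 1) * (\<Sum>i\<in>I. c i powr q)"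
proof -
  define J where "J = {i\<in>I. c i > 0}"
  have JI: "J \<subseteq> I" and finJ: "finite J" using fin by (auto simp: J_def)
  have sJ: "(\<Sum>i\<in>I. c i) = (\<Sum>i\<in>J. c i)"
    by (rule sum.mono_neutral_right[OF fin JI]) (use nn in \<open>force simp: J_def\<close>)
  have sJq: "(\<Sum>i\<in>I. c i powr q) = (\<Sum>i\<in>J. c i powr q)"
    by (rule sum.mono_neutral_right[OF fin JI]) (use nn q in \<open>force simp: J_def\<close>)
  show ?thesis
  proof (cases "J = {}")
    case True
    then show ?thesis using sJ q by (simp add: sum_nonneg)
  next
    case False
    define m where "m = real (card J)"
    have m0: "m > 0" using False finJ by (simp add: m_def card_gt_0_iff)
    have "(\<Sum>i\<in>J. (1/m) *\<^sub>R c i) powr q \<le> (\<Sum>i\<in>J. (1/m) * c i powr q)"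
      by (rule convex_on_sum[OF finJ False powr_convex[OF q]])
         (use m0 in \<open>auto simp: J_def m_def\<close>)
    then have "((\<Sum>i\<in>J. c i) / m) powr q \<le> (\<Sum>i\<in>J. c i powr q) / m"
      by (simp add: sum_divide_distrib[symmetric] sum_distrib_left[symmetric] divide_inverse mult.commute)
    then have "(\<Sum>i\<in>J. c i) powr q / m powr q \<le> (\<Sum>i\<in>J. c i powr q) / m"
      by (simp add: powr_divide)
    then have "(\<Sum>i\<in>J. c i) powr q \<le> (\<Sum>i\<in>J. c i powr q) / m * m powr q"
      using m0 by (simp add: divide_le_eq)
    also have "\<dots> = m powr (q - 1) * (\<Sum>i\<in>J. c i powr q)"
      using m0 by (simp add: powr_diff)
    also have "\<dots> \<le> real (card I) powr (q - 1) * (\<Sum>i\<in>J. c i powr q)"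
      apply (rule mult_right_mono)
       apply (rule powr_mono2)
      using q m0 card_mono[OF fin JI] by (auto simp: m_def sum_nonneg)
    finally show ?thesis using sJ sJq by simp
  qed
qed

lemma two_powr_le:
  fixes x y q :: real
  assumes "q \<ge> 1" "x \<ge> 0" "y \<ge> 0"
  shows "(x + y) powr q \<le> 2 powr (q - 1) * (x powr q + y powr q)"
  using power_sum_le[OF assms(1), of "{0::nat,1}" "\<lambda>i. if i = 0 then x else y"] assms
  by simp

lemma core_common:
  fixes la lb c :: "nat \<Rightarrow> real" and n :: nat and La Lb :: real
  assumes La: "La > 0" and Lb: "Lb > 0"
    and nn: "\<And>i. i < n \<Longrightarrow> la i \<ge> 0 \<and> lb i \<ge> 0 \<and> \<bar>la i - lb i\<bar> \<le> 2 * c i"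
    and sa: "(\<Sum>i<n. la i) = La" and sb: "(\<Sum>i<n. lb i) = Lb"
  defines "w \<equiv> \<lambda>i. if Lb \<le> La then lb i / Lb else la i / La"
  shows "i < n \<Longrightarrow> \<bar>la i/La - lb i/Lb\<bar> \<le> 2 * c i / max La Lb + 2 * (\<Sum>j<n. c j) * w i / max La Lb"
    and "i < n \<Longrightarrow> 0 \<le> w i \<and> w i \<le> 1"
    and "(\<Sum>i<n. w i) = 1"
    and "n \<ge> 1"
    and "i < n \<Longrightarrow> c i \<ge> 0"
proof -
  show c0: "i < n \<Longrightarrow> c i \<ge> 0" for i using nn[of i] by (smt (verit))
  show "n \<ge> 1" using sa La by (cases n) auto
  have D: "\<bar>La - Lb\<bar> \<le> 2 * (\<Sum>j<n. c j)"
  proof -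
    have "\<bar>La - Lb\<bar> = \<bar>\<Sum>j<n. la j - lb j\<bar>" using sa sb by (simp add: sum_subtractf)
    also have "\<dots> \<le> (\<Sum>j<n. \<bar>la j - lb j\<bar>)" by (rule sum_abs)
    also have "\<dots> \<le> (\<Sum>j<n. 2 * c j)" by (rule sum_mono) (use nn in auto)
    finally show ?thesis by (simp add: sum_distrib_left)
  qed
  show sw: "(\<Sum>i<n. w i) = 1"
    using sa sb La Lb by (cases "Lb \<le> La") (simp_all add: w_def sum_divide_distrib[symmetric])
  show w01: "0 \<le> w i \<and> w i \<le> 1" if i: "i < n" for i
  proof
    show "0 \<le> w i" using nn[OF i] La Lb by (simp add: w_def)
    have "\<forall>j\<in>{..<n}. 0 \<le> w j" using nn La Lb by (simp add: w_def)
    then have "w i \<le> (\<Sum>j<n. w j)"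
      using i by (intro member_le_sum) auto
    then show "w i \<le> 1" using sw by simp
  qed
  show "\<bar>la i/La - lb i/Lb\<bar> \<le> 2 * c i / max La Lb + 2 * (\<Sum>j<n. c j) * w i / max La Lb"
    if i: "i < n" for i
  proof -
    have "\<bar>la i/La - lb i/Lb\<bar> \<le> \<bar>la i - lb i\<bar>/max La Lb + (2 * (\<Sum>j<n. c j)) * w i / max La Lb"
      using elem[OF La Lb _ _ D, of "la i" "lb i"] nn[OF i] by (simp add: w_def)
    moreover have "\<bar>la i - lb i\<bar>/max La Lb \<le> 2 * c i / max La Lb"
      using nn[OF i] La by (intro divide_right_mono) auto
    ultimately show ?thesis by linarith
  qed
qed

lemma core_fin:
  fixes la lb c :: "nat \<Rightarrow> real" and n :: nat and La Lb q :: real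
  assumes q: "q \<ge> 1" and La: "La > 0" and Lb: "Lb > 0"
    and nn: "\<And>i. i < n \<Longrightarrow> la i \<ge> 0 \<and> lb i \<ge> 0 \<and> \<bar>la i - lb i\<bar> \<le> 2 * c i"
    and sa: "(\<Sum>i<n. la i) = La" and sb: "(\<Sum>i<n. lb i) = Lb"
  shows "(\<Sum>i<n. \<bar>la i/La - lb i/Lb\<bar> powr q) powr (1/q)
     \<le> 4 * real n powr (1 - 1/q) * (\<Sum>i<n. c i powr q) powr (1/q) / max La Lb"
proof -
  define w where "w \<equiv> \<lambda>i. if Lb \<le> La then lb i / Lb else la i / La"
  note cc = core_common[of La Lb n la lb c, OF La Lb nn sa sb, folded w_def]
  define L where "L = max La Lb"
  define S where "S = (\<Sum>j<n. c j)"
  define C where "C = (\<Sum>j<n. c j powr q)"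
  have L0: "L > 0" using La by (simp add: L_def)
  have S0: "S \<ge> 0" unfolding S_def by (rule sum_nonneg) (use cc(5) in auto)
  have C0: "C \<ge> 0" by (simp add: C_def sum_nonneg)
  have SC: "S powr q \<le> real n powr (q - 1) * C"
    using power_sum_le[OF q, of "{..<n}" c] cc(5) by (simp add: S_def C_def)
  have n1: "real n powr (q - 1) \<ge> 1" using cc(4) q by (intro ge_one_powr_ge_zero) auto
  have step: "\<bar>la i/La - lb i/Lb\<bar> powr q \<le> 2 powr (q - 1) * ((2/L) powr q * c i powr q + (2*S/L) powr q * w i)"
    if i: "i < n" for i
  proof -
    have c0: "c i \<ge> 0" using cc(5) i by simp
    have w: "0 \<le> w i" "w i \<le> 1" using cc(2)[of i] i by (auto simp: w_def)
    have "\<bar>la i/La - lb i/Lb\<bar> powr q \<le> ((2/L) * c i + (2*S/L) * w i) powr q"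
      using cc(1)[of i] i q by (intro powr_mono2) (auto simp: L_def S_def w_def)
    also have "\<dots> \<le> 2 powr (q - 1) * (((2/L) * c i) powr q + ((2*S/L) * w i) powr q)"
      using q c0 w L0 S0 by (intro two_powr_le) auto
    also have "((2*S/L) * w i) powr q \<le> (2*S/L) powr q * w i"
    proof -
      have "w i powr q \<le> w i powr 1" using w q by (intro powr_mono') auto
      then have "w i powr q \<le> w i" using w by simp
      then have "(2*S/L) powr q * w i powr q \<le> (2*S/L) powr q * w i" by (simp add: mult_left_mono)
      moreover have "((2*S/L) * w i) powr q = (2*S/L) powr q * w i powr q" by (rule powr_mult)
      ultimately show ?thesis by simp
    qed
    then have "2 powr (q - 1) * (((2/L) * c i) powr q + ((2*S/L) * w i) powr q)
       \<le> 2 powr (q - 1) * ((2/L) powr q * c i powr q + (2*S/L) powr q * w i)"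
      using powr_mult[of "2/L" "c i" q] by (intro mult_left_mono) auto
    finally show ?thesis .
  qed
  have "(\<Sum>i<n. \<bar>la i/La - lb i/Lb\<bar> powr q) \<le> (\<Sum>i<n. 2 powr (q - 1) * ((2/L) powr q * c i powr q + (2*S/L) powr q * w i))"
    by (rule sum_mono) (use step in auto)
  also have "\<dots> = 2 powr (q - 1) * ((2/L) powr q * C + (2*S/L) powr q)"
    using cc(3) by (simp add: sum.distrib sum_distrib_left[symmetric] C_def w_def)
  also have "(2*S/L) powr q = (2/L) powr q * S powr q"
    by (simp add: powr_mult[symmetric])
  also have "2 powr (q - 1) * ((2/L) powr q * C + (2/L) powr q * S powr q)
      \<le> 2 powr (q - 1) * ((2/L) powr q * (2 * real n powr (q - 1) * C))"
  proof -
    have "C + S powr q \<le> 2 * real n powr (q - 1) * C"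
    proof -
      have "C \<le> real n powr (q - 1) * C" using n1 C0 mult_right_mono[OF n1 C0] by simp
      then show ?thesis using SC by simp
    qed
    then show ?thesis
      by (simp add: distrib_left[symmetric] mult_left_mono)
  qed
  also have "\<dots> = (4/L) powr q * (real n powr (q - 1) * C)"
  proof -
    have "2 powr (q - 1) * 2 = 2 powr q" by (simp add: powr_diff)
    moreover have "(4/L) powr q = 2 powr q * (2/L) powr q" by (simp add: powr_mult[symmetric])
    ultimately show ?thesis by (simp add: algebra_simps)
  qed
  finally have main: "(\<Sum>i<n. \<bar>la i/La - lb i/Lb\<bar> powr q) \<le> (4/L) powr q * (real n powr (q - 1) * C)" .
  have "(\<Sum>i<n. \<bar>la i/La - lb i/Lb\<bar> powr q) powr (1/q) \<le> ((4/L) powr q * (real n powr (q - 1) * C)) powr (1/q)"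
    using main q by (intro powr_mono2) (auto simp: sum_nonneg)
  also have "\<dots> = (4/L) * real n powr (1 - 1/q) * C powr (1/q)"
  proof -
    have "((4/L) powr q * (real n powr (q - 1) * C)) powr (1/q)
        = (4/L) powr (q * (1/q)) * (real n powr ((q - 1) * (1/q)) * C powr (1/q))"
      by (simp add: powr_mult powr_powr)
    moreover have "q * (1/q) = 1" using q by simp
    moreover have "(q - 1) * (1/q) = 1 - 1/q" using q by (simp add: field_simps)
    ultimately show ?thesis using L0 by simp
  qed
  finally show ?thesis by (simp add: L_def C_def)
qed

lemma core_inf:
  fixes la lb c :: "nat \<Rightarrow> real" and n :: nat and La Lb :: real
  assumes La: "La > 0" and Lb: "Lb > 0"
    and nn: "\<And>i. i < n \<Longrightarrow> la i \<ge> 0 \<and> lb i \<ge> 0 \<and> \<bar>la i - lb i\<bar> \<le> 2 * c i"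
    and sa: "(\<Sum>i<n. la i) = La" and sb: "(\<Sum>i<n. lb i) = Lb"
  shows "Max (insert 0 {\<bar>la i/La - lb i/Lb\<bar> | i. i < n})
     \<le> 4 * real n * Max (insert 0 {c i | i. i < n}) / max La Lb"
proof -
  define w where "w \<equiv> \<lambda>i. if Lb \<le> La then lb i / Lb else la i / La"
  note cc = core_common[of La Lb n la lb c, OF La Lb nn sa sb]
  define L where "L = max La Lb"
  define M where "M = Max (insert 0 {c i | i. i < n})"
  have fin: "finite {c i | i. i < n}" by simp
  have M0: "M \<ge> 0" using fin by (simp add: M_def)
  have cM: "c i \<le> M" if "i < n" for i using fin that by (auto simp: M_def intro: Max_ge)
  have L0: "L > 0" using La by (simp add: L_def)
  have S: "(\<Sum>j<n. c j) \<le> real n * M"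
    using sum_mono[of "{..<n}" c "\<lambda>_. M"] cM by simp
  have S0: "(\<Sum>j<n. c j) \<ge> 0" by (rule sum_nonneg) (use cc(5) in auto)
  have n1: "real n \<ge> 1" using cc(4) by simp
  have b: "\<bar>la i/La - lb i/Lb\<bar> \<le> 4 * real n * M / L" if i: "i < n" for i
  proof -
    have w: "0 \<le> w i" "w i \<le> 1" using cc(2)[of i] i by (auto simp: w_def)
    have "\<bar>la i/La - lb i/Lb\<bar> \<le> 2 * c i / L + 2 * (\<Sum>j<n. c j) * w i / L"
      using cc(1)[of i] i by (simp add: L_def w_def)
    also have "\<dots> \<le> 2 * M / L + 2 * (real n * M) * 1 / L"
      using cM[OF i] S w S0 L0 M0 cc(5)[of i] i
      by (intro add_mono divide_right_mono mult_mono) auto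
    also have "\<dots> \<le> 4 * real n * M / L"
    proof -
      have "M \<le> real n * M" using n1 M0 mult_right_mono[OF n1 M0] by simp
      then show ?thesis using L0 by (simp add: divide_right_mono field_simps)
    qed
    finally show ?thesis .
  qed
  have "0 \<le> 4 * real n * M / L" using M0 L0 by simp
  then show ?thesis using b by (auto simp: L_def M_def)
qed

lemma psi_enum:
  assumes pe: "padded_enum n A xs"
  shows "padded_enum n (psi A) (map (\<lambda>q. (0, (snd q - fst q) / total_length A)) xs)"
proof -
  obtain P where len: "length xs = n" and mP: "mset xs = A + P" and Pd: "\<forall>q\<in>#P. fst q = snd q"
    using pe unfolding padded_enum_def by blast
  define f where "f = (\<lambda>q::real\<times>real. (0::real, (snd q - fst q) / total_length A))"
  have "mset (map f xs) = image_mset f (mset xs)" by (rule mset_map)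
  also have "\<dots> = image_mset f A + image_mset f P" using mP by simp
  also have "image_mset f A = psi A" by (simp add: psi_def f_def)
  finally have m: "mset (map f xs) = psi A + image_mset f P" .
  have d: "\<forall>q\<in># image_mset f P. fst q = snd q" using Pd by (auto simp: f_def)
  have "padded_enum n (psi A) (map f xs)"
    unfolding padded_enum_def using len m d by auto
  then show ?thesis by (simp add: f_def)
qed

lemma enum_facts:
  assumes pe: "padded_enum n A xs" and bf: "in_BF A"
  shows "i < n \<Longrightarrow> snd (xs!i) - fst (xs!i) \<ge> 0"
    and "(\<Sum>i<n. snd (xs!i) - fst (xs!i)) = total_length A"
    and "length xs = n"
proof -
  obtain P where len: "length xs = n" and mP: "mset xs = A + P" and Pd: "\<forall>q\<in>#P. fst q = snd q"
    using pe unfolding padded_enum_def by blast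
  show "length xs = n" by (rule len)
  show "snd (xs!i) - fst (xs!i) \<ge> 0" if "i < n"
  proof -
    have "xs!i \<in># mset xs" using that len by simp
    then have "xs!i \<in># A + P" using mP by simp
    then have "xs!i \<in># A \<or> xs!i \<in># P" by simp
    then show ?thesis
    proof
      assume "xs!i \<in># A" then show ?thesis using bf unfolding in_BF_def by fastforce
    next
      assume "xs!i \<in># P" then show ?thesis using Pd by fastforce
    qed
  qed
  define g where "g = (\<lambda>q::real\<times>real. snd q - fst q)"
  have "(\<Sum>i<n. g (xs!i)) = sum_list (map g xs)"
    using len by (simp add: sum_list_sum_nth atLeast0LessThan)
  also have "\<dots> = sum_mset (image_mset g (mset xs))"
    by (metis mset_map sum_mset_sum_list)
  also have "\<dots> = sum_mset (image_mset g A) + sum_mset (image_mset g P)"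
    using mP by simp
  also have "sum_mset (image_mset g P) = 0"
    using Pd by (intro sum_mset.neutral) (auto simp: g_def)
  finally show "(\<Sum>i<n. snd (xs!i) - fst (xs!i)) = total_length A"
    by (simp add: total_length_def g_def)
qed

lemma match_cost_nonneg: "match_cost p xs ys \<ge> 0"
proof -
  have "finite {icost (xs ! i) (ys ! i) | i. i < length xs}" by simp
  then show ?thesis unfolding match_cost_def by simp
qed

lemma one_bound:
  fixes p :: ereal and A B :: barcode
  assumes p: "1 \<le> p" and bfA: "in_BF A" and bfB: "in_BF B"
    and LA: "total_length A > 0" and LB: "total_length B > 0"
    and peA: "padded_enum (n_max A B) A xs" and peB: "padded_enum (n_max A B) B ys"
  shows "match_cost p (map (\<lambda>q. (0, (snd q - fst q) / total_length A)) xs)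
                       (map (\<lambda>q. (0, (snd q - fst q) / total_length B)) ys)
         \<le> 4 * nexp p (n_max A B) * match_cost p xs ys / L_max A B"
proof -
  define n where "n = n_max A B"
  define La where "La = total_length A"
  define Lb where "Lb = total_length B"
  define la where "la = (\<lambda>i. snd (xs!i) - fst (xs!i))"
  define lb where "lb = (\<lambda>i. snd (ys!i) - fst (ys!i))"
  define c where "c = (\<lambda>i. icost (xs!i) (ys!i))"
  note fA = enum_facts[OF peA bfA, folded n_def]
  note fB = enum_facts[OF peB bfB, folded n_def]
  have nn: "la i \<ge> 0 \<and> lb i \<ge> 0 \<and> \<bar>la i - lb i\<bar> \<le> 2 * c i" if i: "i < n" for i
    using fA(1)[OF i] fB(1)[OF i]
    by (simp add: la_def lb_def c_def icost_def) (smt (verit))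
  have sa: "(\<Sum>i<n. la i) = La" using fA(2) by (simp add: la_def La_def)
  have sb: "(\<Sum>i<n. lb i) = Lb" using fB(2) by (simp add: lb_def Lb_def)
  have La0: "La > 0" and Lb0: "Lb > 0" using LA LB by (simp_all add: La_def Lb_def)
  have lenx: "length xs = n" and leny: "length ys = n" using fA(3) fB(3) by simp_all
  have eqT: "icost (map (\<lambda>q. (0, (snd q - fst q) / total_length A)) xs ! i)
                   (map (\<lambda>q. (0, (snd q - fst q) / total_length B)) ys ! i)
           = \<bar>la i / La - lb i / Lb\<bar>" if i: "i < n" for i
    using i lenx leny by (simp add: icost_def la_def lb_def La_def Lb_def)
  have Lm: "L_max A B = max La Lb" by (simp add: L_max_def La_def Lb_def)
  show ?thesis
  proof (cases "p = \<infinity>")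
    case True
    have s1: "{icost (map (\<lambda>q. (0, (snd q - fst q) / total_length A)) xs ! i)
                   (map (\<lambda>q. (0, (snd q - fst q) / total_length B)) ys ! i) | i.
              i < length (map (\<lambda>q. (0, (snd q - fst q) / total_length A)) xs)}
            = {\<bar>la i / La - lb i / Lb\<bar> | i. i < n}"
      unfolding length_map lenx by (intro Collect_cong ex_cong1) (use eqT in auto)
    have s2: "{icost (xs ! i) (ys ! i) | i. i < length xs} = {c i | i. i < n}"
      using lenx by (simp add: c_def)
    show ?thesis
      using core_inf[OF La0 Lb0 nn sa sb] True s1 s2
      by (simp add: match_cost_def nexp_def Lm n_def)
  next
    case False
    obtain q where pq: "p = ereal q" using False p by (cases p) auto
    have q1: "q \<ge> 1" using p pq by simp
    have s1: "(\<Sum>i<length (map (\<lambda>q. (0, (snd q - fst q) / total_length A)) xs).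
                icost (map (\<lambda>q. (0, (snd q - fst q) / total_length A)) xs ! i)
                   (map (\<lambda>q. (0, (snd q - fst q) / total_length B)) ys ! i) powr q)
            = (\<Sum>i<n. \<bar>la i / La - lb i / Lb\<bar> powr q)"
      unfolding length_map lenx by (rule sum.cong) (simp_all add: eqT)
    have s2: "(\<Sum>i<length xs. icost (xs ! i) (ys ! i) powr q) = (\<Sum>i<n. c i powr q)"
      using lenx by (simp add: c_def)
    show ?thesis
      using core_fin[OF q1 La0 Lb0 nn sa sb] pq s1 s2
      by (simp add: match_cost_def nexp_def Lm n_def)
  qed
qed

lemma exists_enum:
  assumes "size A \<le> n"
  shows "\<exists>xs. padded_enum n A xs"
proof -
  obtain xs0 where m: "mset xs0 = A" using ex_mset by blast
  let ?xs = "xs0 @ replicate (n - size A) (0::real, 0::real)"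
  have "length ?xs = n" using assms m by (auto simp: size_mset[symmetric])
  moreover have "mset ?xs = A + mset (replicate (n - size A) (0::real, 0::real))" using m by simp
  moreover have "\<forall>q\<in># mset (replicate (n - size A) (0::real, 0::real)). fst q = snd q" by simp
  ultimately show ?thesis unfolding padded_enum_def by blast
qed

theorem lemma4:
  fixes p :: ereal and A B :: barcode
  assumes "1 \<le> p" and "in_BF A" and "in_BF B"
    and "total_length A > 0" and "total_length B > 0"
  shows "wdist p (psi A) (psi B) \<le> 4 * nexp p (n_max A B) * wdist p A B / L_max A B
       \<and> 4 * nexp p (n_max A B) * wdist p A B / L_max A B = 2 * rel_err p A B"
proof
  show "4 * nexp p (n_max A B) * wdist p A B / L_max A B = 2 * rel_err p A B"
    by (simp add: rel_err_def)
  define n where "n = n_max A B"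
  define K where "K = 4 * nexp p n / L_max A B"
  have "A \<noteq> {#}" using assms(4) by (auto simp: total_length_def)
  then have "size A \<ge> 1" by (simp add: Suc_le_eq nonempty_has_size)
  then have n1: "n \<ge> 1" by (simp add: n_def n_max_def)
  have nexp0: "nexp p n > 0" using n1 by (simp add: nexp_def)
  have L0: "L_max A B > 0" using assms(4) by (simp add: L_max_def)
  have K0: "K > 0" using nexp0 L0 by (simp add: K_def)
  have npsi: "n_max (psi A) (psi B) = n" by (simp add: n_max_def psi_def n_def)
  define SA where "SA = {match_cost p xs ys | xs ys. padded_enum n A xs \<and> padded_enum n B ys}"
  define SP where "SP = {match_cost p xs ys | xs ys. padded_enum n (psi A) xs \<and> padded_enum n (psi B) ys}"
  have wA: "wdist p A B = Inf SA" by (simp add: wdist_def SA_def n_def)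
  have wP: "wdist p (psi A) (psi B) = Inf SP" by (simp add: wdist_def SP_def npsi)
  have bddP: "bdd_below SP" unfolding SP_def
    by (rule bdd_belowI[of _ 0]) (auto simp: match_cost_nonneg)
  obtain xs0 where x0: "padded_enum n A xs0" using exists_enum[of A n] by (auto simp: n_def n_max_def)
  obtain ys0 where y0: "padded_enum n B ys0" using exists_enum[of B n] by (auto simp: n_def n_max_def)
  have neA: "SA \<noteq> {}" using x0 y0 by (auto simp: SA_def)
  have "Inf SP / K \<le> m" if "m \<in> SA" for m
  proof -
    obtain xs ys where m: "m = match_cost p xs ys" and px: "padded_enum n A xs" and py: "padded_enum n B ys"
      using \<open>m \<in> SA\<close> by (auto simp: SA_def)
    have "Inf SP \<le> match_cost p (map (\<lambda>q. (0, (snd q - fst q) / total_length A)) xs)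
                       (map (\<lambda>q. (0, (snd q - fst q) / total_length B)) ys)"
      using psi_enum[OF px] psi_enum[OF py] bddP by (intro cInf_lower) (auto simp: SP_def)
    also have "\<dots> \<le> K * m"
      using one_bound[OF assms px[unfolded n_def] py[unfolded n_def]] m
      by (simp add: K_def n_def)
    finally show ?thesis using K0 by (simp add: divide_le_eq mult.commute)
  qed
  then have "Inf SP / K \<le> Inf SA" using neA by (intro cInf_greatest) auto
  then have "Inf SP \<le> K * Inf SA" using K0 by (simp add: divide_le_eq mult.commute)
  then show "wdist p (psi A) (psi B) \<le> 4 * nexp p (n_max A B) * wdist p A B / L_max A B"
    using wA wP by (simp add: K_def n_def)
qed

end
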